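(* Let $p>3$ be a prime, $q=p^h$, and $a,b\in\mathbb{F}_{q^2}^*$. If there exist $A,B,C,D\in\overline{\mathbb{F}_q}$ such that $$F_{a,b}(X,Y)=-b\bigl(XY+A(X+Y)+C\bigr)\bigl(XY+B(X+Y)+D\bigr),$$ then $N_{a,b}(X)$ and $D_{a,b}(X)$ have a nonconstant common factor.
   Context: $N_{a,b}(X)=a^qX^3+X^2+b^q$, $D_{a,b}(X)=bX^3+X+a$, and $$F_{a,b}(X,Y)=\frac{N_{a,b}(X)D_{a,b}(Y)-N_{a,b}(Y)D_{a,b}(X)}{X-Y}\in\mathbb{F}_{q^2}[X,Y].$$ *)

theory Defs
  imports "HOL-Computational_Algebra.Computational_Algebra"
begin

definition Npoly :: "nat \<Rightarrow> 'k::field \<Rightarrow> 'k \<Rightarrow> 'k poly" where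
  "Npoly q a b = [: b ^ q, 0, 1, a ^ q :]"

definition Dpoly :: "'k::field \<Rightarrow> 'k \<Rightarrow> 'k poly" where
  "Dpoly a b = [: a, 1, 0, b :]"

(* Bivariate polynomials in k[X,Y] are represented as ('k poly) poly:
   the outer variable is Y, the coefficients are polynomials in X. *)
definition polyX :: "'k::zero poly \<Rightarrow> 'k poly poly" where
  "polyX f = [: f :]"

definition polyY :: "'k::zero poly \<Rightarrow> 'k poly poly" where
  "polyY f = map_poly (\<lambda>c. [: c :]) f"

definition XminusY :: "'k::comm_ring_1 poly poly" where
  "XminusY = [: [:0, 1:], -1 :]"

definition Fpoly :: "nat \<Rightarrow> 'k::field \<Rightarrow> 'k \<Rightarrow> 'k poly poly" where
  "Fpoly q a b =
     (polyX (Npoly q a b) * polyY (Dpoly a b) - polyY (Npoly q a b) * polyX (Dpoly a b))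
       div XminusY"

definition quadXY :: "'k::comm_ring_1 \<Rightarrow> 'k \<Rightarrow> 'k poly poly" where
  "quadXY A C = [: [:C, A:], [:A, 1:] :]"

definition alg_closed_field :: "'k::field itself \<Rightarrow> bool" where
  "alg_closed_field _ \<longleftrightarrow> (\<forall>f :: 'k poly. degree f > 0 \<longrightarrow> (\<exists>x. poly f x = 0))"

(* 'k is an algebraic closure of F_p: algebraically closed of characteristic p,
   and every element is algebraic over F_p (lies in some finite field F_{p^n}). *)
definition is_alg_closure_Fp :: "'k::field itself \<Rightarrow> nat \<Rightarrow> bool" where
  "is_alg_closure_Fp T p \<longleftrightarrow> CHAR('k) = p \<and> alg_closed_field T \<and>
      (\<forall>x::'k. \<exists>n>0. x ^ (p ^ n) = x)"

end

theory Submission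
  imports Defs
begin

lemma num: fixes a b :: "'k::field" shows
 "polyX (Npoly q a b) * polyY (Dpoly a b) - polyY (Npoly q a b) * polyX (Dpoly a b)
  = XminusY * [: [:-(b^q), a, a^q*a - b^q*b:], [:a, a^q*a - b^q*b + 1, a^q:], [:a^q*a - b^q*b, a^q, -b:] :]"
  by (simp add: Npoly_def Dpoly_def polyX_def polyY_def XminusY_def map_poly_pCons algebra_simps)

lemma rhs: fixes b A B C D :: "'k::field" shows
 "[:[: - b :]:] * quadXY A C * quadXY B D = [: [:-b*C*D, -b*(A*D+B*C), -b*A*B:], [:-b*(A*D+B*C), -b*(2*A*B+C+D), -b*(A+B):], [:-b*A*B, -b*(A+B), -b:] :]"
  by (simp add: quadXY_def algebra_simps)

lemma Fexp: fixes a b :: "'k::field" shows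
 "Fpoly q a b = [: [:-(b^q), a, a^q*a - b^q*b:], [:a, a^q*a - b^q*b + 1, a^q:], [:a^q*a - b^q*b, a^q, -b:] :]"
proof -
  have "XminusY \<noteq> (0::'k poly poly)" by (simp add: XminusY_def)
  then show ?thesis unfolding Fpoly_def num by (rule nonzero_mult_div_cancel_left)
qed

lemma common_root:
  fixes a b A B C D al be :: "'k::field"
  assumes b: "b \<noteq> 0" and C: "C = A^2"
    and e1: "al = -b*(A+B)" and e3: "1 = -b*(A*B+C+D)" and e4: "be = b*C*D"
    and e5: "a = -b*(A*D+B*C)"
  shows "\<exists>g :: 'k poly. degree g > 0 \<and> g dvd [: be, 0, 1, al :] \<and> g dvd [: a, 1, 0, b :]"
proof -
  have "poly [: be, 0, 1, al :] (-A) = be + A^2 * 1 - al*A^3" by (simp add: algebra_simps power2_eq_square power3_eq_cube)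
  also have "\<dots> = be + A^2 * (-b*(A*B+C+D)) - al*A^3" using e3 by simp
  also have "\<dots> = 0" unfolding e1 e4 C by (simp add: algebra_simps power2_eq_square power3_eq_cube)
  finally have r1: "poly [: be, 0, 1, al :] (-A) = 0" .
  have "poly [: a, 1, 0, b :] (-A) = -b*A^3 - A*1 + a" by (simp add: algebra_simps power3_eq_cube)
  also have "\<dots> = -b*A^3 - A*(-b*(A*B+C+D)) + a" using e3 by simp
  also have "\<dots> = 0" unfolding e5 C by (simp add: algebra_simps power2_eq_square power3_eq_cube)
  finally have r2: "poly [: a, 1, 0, b :] (-A) = 0" .
  have d1: "[:-(-A), 1:] dvd [: be, 0, 1, al :]" using r1 by (simp only: poly_eq_0_iff_dvd)
  have d2: "[:-(-A), 1:] dvd [: a, 1, 0, b :]" using r2 by (simp only: poly_eq_0_iff_dvd)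
  show ?thesis
    by (rule exI[of _ "[:-(-A), 1:]"]) (use d1 d2 in simp)
qed

theorem mainTheorem9:
  fixes p h q :: nat and a b A B C D :: "'k::field"
  assumes "prime p" and "p > 3" and "h > 0" and "q = p ^ h"
    and "is_alg_closure_Fp TYPE('k) p"
    and "a \<noteq> 0" and "b \<noteq> 0" and "a ^ (q ^ 2) = a" and "b ^ (q ^ 2) = b"
    and "Fpoly q a b = [:[: - b :]:] * quadXY A C * quadXY B D"
  shows "\<exists>g :: 'k poly. degree g > 0 \<and> g dvd Npoly q a b \<and> g dvd Dpoly a b"
proof -
  define al where "al = a^q"
  define be where "be = b^q"
  define k where "k = al*a - be*b"
  have E: "[: [:-be, a, k:], [:a, k + 1, al:], [:k, al, -b:] :]
     = [: [:-b*C*D, -b*(A*D+B*C), -b*A*B:], [:-b*(A*D+B*C), -b*(2*A*B+C+D), -b*(A+B):], [:-b*A*B, -b*(A+B), -b:] :]"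
    using assms(10) unfolding Fexp rhs al_def be_def k_def .
  have e1: "al = -b*(A+B)" and e2: "k = -b*A*B" and e3': "k + 1 = -b*(2*A*B+C+D)"
    and e4: "be = b*C*D" and e5: "a = -b*(A*D+B*C)"
    using E by auto
  have e3: "1 = -b*(A*B+C+D)" using e2 e3' by (simp add: algebra_simps)
  have "b * ((A^2-C)*(B^2-D)) = A*B*(b*(A*B+C+D)) - b*((A+B)*(A*D+B*C) - C*D)"
    by (simp add: algebra_simps power2_eq_square)
  also have "\<dots> = -A*B - b*((A+B)*(A*D+B*C) - C*D)"
  proof -
    have "b*(A*B+C+D) = -1" using arg_cong[OF e3, of uminus] by simp 
    thus ?thesis by simp
  qed
  also have "\<dots> = 0"
  proof -
    have "k = al*a - be*b" by (simp add: k_def)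
    hence "-b*A*B = (-b*(A+B))*(-b*(A*D+B*C)) - b*C*D*b" using e1 e2 e4 e5 by simp
    hence "b*(-A*B - b*((A+B)*(A*D+B*C) - C*D)) = 0" by (simp add: algebra_simps)
    thus ?thesis using assms(7) by simp
  qed
  finally have "(A^2-C)*(B^2-D) = 0" using assms(7) by simp
  hence "C = A^2 \<or> D = B^2" by auto
  thus ?thesis
  proof
    assume "C = A^2"
    from common_root[OF assms(7) this e1 e3 e4 e5] show ?thesis
      by (simp add: Npoly_def Dpoly_def al_def be_def)
  next
    assume "D = B^2"
    have e1': "al = -b*(B+A)" and e3'': "1 = -b*(B*A+D+C)" and e4': "be = b*D*C"
      and e5': "a = -b*(B*C+A*D)" using e1 e3 e4 e5 by (simp_all add: algebra_simps)
    from common_root[OF assms(7) \<open>D = B^2\<close> e1' e3'' e4' e5'] show ?thesis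
      by (simp add: Npoly_def Dpoly_def al_def be_def)
  qed
qed

end
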